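(* Let $a,b\in\mathbb{N}$ with $a\ge b$, let $T(a,b)$ be the classical Jacobi operator, fix $k\in\{0,1,\ldots,b-1\}$ and let $E_k$ be the eigenspace of $T(a,b)$ for the eigenvalue $(k+1)(k-a-b)$. Then $E_k$ is 2-dimensional and consists of rational functions. There are three distinct one-dimensional subspaces $L_2,L_3,L_4\subset E_k$ such that: every nonzero element of $L_2$ is a type 2 eigenfunction of index $k$ and degree $k-a-b$; every nonzero element of $L_3$ is a type 3 eigenfunction of index $a-k-1$ and degree $-k-1$; every nonzero element of $L_4$ is a type 4 eigenfunction of index $b-k-1$ and degree $-k-1$; and every element of $E_k\setminus(L_2\cup L_3\cup L_4)$ is a type 2 eigenfunction of index $a+b-k-1$ and degree $-k-1$.
   Context: $D=d/dx$; $T(a,b)=(x^2-1)\big(D^2+(\frac{a+1}{x-1}+\frac{b+1}{x+1})D\big)$. For a nonzero eigenfunction $\phi$ with $w=\phi'/\phi$ rational: its asymptotic type is 1 if $w$ is regular at $x=\pm1$, 2 if $w$ has poles at both $x=1$ and $x=-1$, 3 if it has a pole at $x=1$ but not at $x=-1$, 4 if it has a pole at $x=-1$ but not at $x=1$; its degree is $\lim_{x\to\infty}xw(x)$ (for rational $\phi$, degree of numerator minus degree of denominator); its index is $\deg\phi-d_\imath$ where $\imath$ is its type and $d_1=0$, $d_2=-a-b$, $d_3=-a$, $d_4=-b$. *)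

theory Defs
  imports "HOL-Analysis.Analysis" "HOL-Computational_Algebra.Polynomial"
begin

text \<open>Eigenfunctions are real functions considered on the interval (1, infinity),
  the region where the Jacobi operator is regular; equality of functions is
  always understood on this interval.\<close>

definition jacobiT :: "nat \<Rightarrow> nat \<Rightarrow> (real \<Rightarrow> real) \<Rightarrow> real \<Rightarrow> real" where
  "jacobiT a b \<phi> x = (x\<^sup>2 - 1) *
     (deriv (deriv \<phi>) x + ((real a + 1) / (x - 1) + (real b + 1) / (x + 1)) * deriv \<phi> x)"

definition jacobi_eigenspace :: "nat \<Rightarrow> nat \<Rightarrow> real \<Rightarrow> (real \<Rightarrow> real) set" where
  "jacobi_eigenspace a b lam =
     {\<phi>. (\<forall>x>1. \<phi> differentiable (at x) \<and> deriv \<phi> differentiable (at x)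
              \<and> jacobiT a b \<phi> x = lam * \<phi> x)}"

definition nonzero_on :: "(real \<Rightarrow> real) \<Rightarrow> bool" where
  "nonzero_on \<phi> \<longleftrightarrow> (\<exists>x>1. \<phi> x \<noteq> 0)"

definition in_line :: "(real \<Rightarrow> real) \<Rightarrow> (real \<Rightarrow> real) \<Rightarrow> bool" where
  "in_line \<psi> \<phi> \<longleftrightarrow> (\<exists>c. \<forall>x>1. \<phi> x = c * \<psi> x)"

definition lin_indep2 :: "(real \<Rightarrow> real) \<Rightarrow> (real \<Rightarrow> real) \<Rightarrow> bool" where
  "lin_indep2 \<phi>1 \<phi>2 \<longleftrightarrow>
     (\<forall>c1 c2. (\<forall>x>1. c1 * \<phi>1 x + c2 * \<phi>2 x = 0) \<longrightarrow> c1 = 0 \<and> c2 = 0)"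

definition rational_fun :: "(real \<Rightarrow> real) \<Rightarrow> bool" where
  "rational_fun \<phi> \<longleftrightarrow> (\<exists>p q. q \<noteq> 0 \<and> (\<forall>x>1. poly q x * \<phi> x = poly p x))"

definition logderiv_rational :: "(real \<Rightarrow> real) \<Rightarrow> bool" where
  "logderiv_rational \<phi> \<longleftrightarrow>
     (\<exists>N D. D \<noteq> 0 \<and> (\<forall>x>1. poly D x * deriv \<phi> x = poly N x * \<phi> x))"

definition logderiv_regular_at :: "(real \<Rightarrow> real) \<Rightarrow> real \<Rightarrow> bool" where
  "logderiv_regular_at \<phi> c \<longleftrightarrow>
     (\<exists>N D. poly D c \<noteq> 0 \<and> (\<forall>x>1. poly D x * deriv \<phi> x = poly N x * \<phi> x))"

definition asym_type :: "(real \<Rightarrow> real) \<Rightarrow> nat" where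
  "asym_type \<phi> =
     (if logderiv_regular_at \<phi> 1 \<and> logderiv_regular_at \<phi> (-1) then 1
      else if \<not> logderiv_regular_at \<phi> 1 \<and> \<not> logderiv_regular_at \<phi> (-1) then 2
      else if \<not> logderiv_regular_at \<phi> 1 then 3
      else 4)"

definition has_eig_degree :: "(real \<Rightarrow> real) \<Rightarrow> real \<Rightarrow> bool" where
  "has_eig_degree \<phi> d \<longleftrightarrow> ((\<lambda>x. x * (deriv \<phi> x / \<phi> x)) \<longlongrightarrow> d) at_top"

definition type_offset :: "nat \<Rightarrow> nat \<Rightarrow> nat \<Rightarrow> real" where
  "type_offset a b t =
     (if t = 1 then 0 else if t = 2 then - real a - real b
      else if t = 3 then - real a else - real b)"

definition has_eig_index :: "nat \<Rightarrow> nat \<Rightarrow> (real \<Rightarrow> real) \<Rightarrow> real \<Rightarrow> bool" where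
  "has_eig_index a b \<phi> i \<longleftrightarrow>
     (\<exists>d. has_eig_degree \<phi> d \<and> i = d - type_offset a b (asym_type \<phi>))"

definition typed_eigenfunction ::
  "nat \<Rightarrow> nat \<Rightarrow> (real \<Rightarrow> real) \<Rightarrow> nat \<Rightarrow> real \<Rightarrow> real \<Rightarrow> bool" where
  "typed_eigenfunction a b \<phi> t i d \<longleftrightarrow>
     nonzero_on \<phi> \<and> logderiv_rational \<phi> \<and> asym_type \<phi> = t
     \<and> has_eig_index a b \<phi> i \<and> has_eig_degree \<phi> d"

end

theory Submission
  imports Defs
begin


definition Lx :: "real \<Rightarrow> real \<Rightarrow> real poly \<Rightarrow> real poly" where
  "Lx A B u = [:-1,0,1:] * pderiv (pderiv u) + [:A-B, A+B+2:] * pderiv u"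

lemma poly_Lx: "poly (Lx A B u) x = (x^2-1)*poly (pderiv (pderiv u)) x + ((A+B+2)*x + (A-B)) * poly (pderiv u) x"
  by (simp add: Lx_def algebra_simps power2_eq_square)

lemma coeff_Lx: "coeff (Lx A B u) i = real i*(real i + A + B + 1) * coeff u i + (A-B)*(real i+1)*coeff u (Suc i) - (real i+1)*(real i+2)*coeff u (Suc (Suc i))"
  by (cases i; cases "i - 1") (auto simp: Lx_def coeff_pderiv coeff_pCons algebra_simps split: nat.split)

definition Ls :: "real \<Rightarrow> real \<Rightarrow> real \<Rightarrow> real poly \<Rightarrow> real poly" where
  "Ls K e g S = [:0, 2*e, 1:] * pderiv (pderiv S) + [:2*e*(g+1), K:] * pderiv S"

lemma coeff_Ls: "coeff (Ls K e g S) i = real i*(real i + K - 1) * coeff S i + 2*e*(real i+1)*(real i+g+1)*coeff S (Suc i)"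
  by (cases i; cases "i - 1") (auto simp: Ls_def coeff_pderiv coeff_pCons algebra_simps split: nat.split)

lemma Lx_degree:
  assumes "Lx A B u = smult \<nu> u" "u \<noteq> 0"
  shows "real (degree u) * (real (degree u) + A + B + 1) = \<nu>"
proof -
  have "coeff (Lx A B u) (degree u) = coeff (smult \<nu> u) (degree u)" using assms by simp
  hence "real (degree u) * (real (degree u) + A + B + 1) * lead_coeff u = \<nu> * lead_coeff u"
    by (simp add: coeff_Lx coeff_eq_0)
  thus ?thesis using assms(2) by simp
qed

lemma pcomp_Lx:
  assumes "e*e = 1" "2*e*(g+1) = (A+B+2)*e + A - B"
  shows "pcompose (Lx A B P) [:e,1:] = Ls (A+B+2) e g (pcompose P [:e,1:])"
proof -
  have d: "pderiv (pcompose Q [:e,1:]) = pcompose (pderiv Q) [:e,1:]" for Q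
    by (simp add: pderiv_pcompose pderiv_pCons)
  have 1: "pcompose [:-1,0,1:] [:e,1:] = [:0, 2*e, 1:]"
    using assms(1) by (simp add: pcompose_pCons algebra_simps)
  have 2: "pcompose [:A-B, A+B+2:] [:e,1:] = [:2*e*(g+1), A+B+2:]"
    using assms(2) by (simp add: pcompose_pCons algebra_simps)
  show ?thesis unfolding Lx_def Ls_def
    by (simp only: pcompose_add pcompose_mult d 1 2)
qed

lemma comp_inv: "pcompose (pcompose X [:e,1:]) [:-e,1:] = (X::real poly)"
proof -
  have "pcompose [:e,1:] [:-e,1:] = [:0,1:]" by (simp add: pcompose_pCons)
  thus ?thesis by (simp add: pcompose_assoc[symmetric])
qed

fun jc :: "real \<Rightarrow> real \<Rightarrow> real \<Rightarrow> real \<Rightarrow> nat \<Rightarrow> real" where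
  "jc K e g \<nu> 0 = 1"
| "jc K e g \<nu> (Suc i) = - ((real i*(real i+K-1) - \<nu>) * jc K e g \<nu> i) / (2*e*(real i+1)*(real i+g+1))"

lemma jac_exists:
  fixes A B e g :: real and m :: nat
  assumes e1: "e*e = 1" and eg: "2*e*(g+1) = (A+B+2)*e + A - B" and g0: "g \<ge> 0"
    and nz: "\<forall>j<m. real m + real j + A + B + 1 \<noteq> 0"
  shows "\<exists>P. Lx A B P = smult (real m*(real m + A + B + 1)) P \<and> degree P = m \<and> poly P e = 1"
proof -
  define K where "K = A+B+2"
  define \<nu> where "\<nu> = real m*(real m + A + B + 1)"
  define c where "c = jc K e g \<nu>"
  have e0: "e \<noteq> 0" using e1 by auto
  have den: "2*e*(real i+1)*(real i+g+1) \<noteq> 0" for i using e0 g0 by (simp add: add_pos_nonneg)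
  have rec: "2*e*(real i+1)*(real i+g+1) * c (Suc i) = - ((real i*(real i+K-1) - \<nu>) * c i)" for i
    using den[of i] by (simp add: c_def)
  have cm: "c (Suc m) = 0" by (simp add: c_def \<nu>_def K_def)
  have cz: "c i = 0" if "i > m" for i
    using that
  proof (induction i)
    case 0 then show ?case by simp
  next
    case (Suc i)
    show ?case
    proof (cases "i = m")
      case True then show ?thesis using cm by simp
    next
      case False
      then have "c i = 0" using Suc by simp
      then show ?thesis by (simp add: c_def)
    qed
  qed
  have cnz: "c i \<noteq> 0" if "i \<le> m" for i
    using that
  proof (induction i)
    case 0 then show ?case by (simp add: c_def)
  next
    case (Suc i)
    have "\<nu> - real i*(real i+K-1) = (real m - real i) * (real m + real i + A + B + 1)"
      by (simp add: \<nu>_def K_def algebra_simps)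
    moreover have "real m - real i \<noteq> 0" using Suc by simp
    moreover have "real m + real i + A + B + 1 \<noteq> 0" using nz Suc by simp
    ultimately have "(real i*(real i+K-1) - \<nu>) * c i \<noteq> 0" using Suc by auto
    then have "2*e*(real i+1)*(real i+g+1) * c (Suc i) \<noteq> 0" using rec[of i] by simp
    then show ?case by auto
  qed
  define S where "S = Poly (map c [0..<Suc m])"
  have cS: "coeff S i = c i" for i
    by (cases "i \<le> m") (auto simp del: upt_Suc simp: S_def nth_default_def cz nth_map_upt less_Suc_eq_le)
  have dS: "degree S = m"
  proof (rule antisym)
    show "degree S \<le> m" by (rule degree_le) (auto simp: cS cz)
    show "m \<le> degree S" by (rule le_degree) (simp add: cS cnz)
  qed
  have LS: "Ls K e g S = smult \<nu> S"
  proof (rule poly_eqI)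
    fix i
    show "coeff (Ls K e g S) i = coeff (smult \<nu> S) i"
      unfolding coeff_Ls cS coeff_smult using rec[of i] by (simp add: algebra_simps)
  qed
  define P where "P = pcompose S [:-e,1:]"
  have PS: "pcompose P [:e,1:] = S"
  proof -
    have "pcompose [:-e,1:] [:e,1:] = [:0,1:]" by (simp add: pcompose_pCons)
    thus ?thesis by (simp add: P_def pcompose_assoc[symmetric])
  qed
  have "pcompose (Lx A B P) [:e,1:] = pcompose (smult \<nu> P) [:e,1:]"
    using pcomp_Lx[OF e1 eg, of P] by (simp add: PS LS[unfolded K_def] pcompose_smult)
  hence "Lx A B P = smult \<nu> P" by (metis comp_inv)
  moreover have "degree P = m" by (simp add: P_def degree_pcompose dS)
  moreover have "poly P e = 1" by (simp add: P_def poly_pcompose poly_0_coeff_0 cS c_def)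
  ultimately show ?thesis unfolding \<nu>_def by blast
qed

lemma jac_nonzero:
  fixes A B e g \<nu> :: real
  assumes e1: "e*e = 1" and eg: "2*e*(g+1) = (A+B+2)*e + A - B"
    and L: "Lx A B P = smult \<nu> P" and P0: "P \<noteq> 0" and nz: "\<forall>i<degree P. real i + g + 1 \<noteq> 0"
  shows "poly P e \<noteq> 0"
proof
  assume Pe: "poly P e = 0"
  define S where "S = pcompose P [:e,1:]"
  have LS: "Ls (A+B+2) e g S = smult \<nu> S"
    using pcomp_Lx[OF e1 eg, of P] by (simp add: S_def L pcompose_smult)
  have dS: "degree S = degree P" by (simp add: S_def degree_pcompose)
  have e0: "e \<noteq> 0" using e1 by auto
  have "coeff S i = 0" if "i \<le> degree P" for i
    using that
  proof (induction i)
    case 0 then show ?case using Pe by (simp add: S_def poly_0_coeff_0[symmetric] poly_pcompose)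
  next
    case (Suc i)
    have ci: "coeff S i = 0" using Suc by simp
    have "coeff (Ls (A+B+2) e g S) i = coeff (smult \<nu> S) i" using LS by simp
    hence "2*e*(real i+1)*(real i+g+1)*coeff S (Suc i) = 0"
      unfolding coeff_Ls coeff_smult ci by simp
    moreover have "real i + g + 1 \<noteq> 0" using nz Suc by simp
    ultimately show ?case using e0 by simp
  qed
  hence "lead_coeff S = 0" using dS by simp
  hence "S = 0" by simp
  hence "P = 0" unfolding S_def by (rule pcompose_eq_0) simp
  thus False using P0 by simp
qed



definition fw :: "nat \<Rightarrow> nat \<Rightarrow> real \<Rightarrow> real" where
  "fw al be x = (x-1) powr (-real al) * (x+1) powr (-real be)"

lemma fw_pos: "x > 1 \<Longrightarrow> fw al be x > 0"
  by (simp add: fw_def)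

lemma fw_deriv: "x > 1 \<Longrightarrow> (fw al be has_real_derivative fw al be x * (- real al/(x-1) - real be/(x+1))) (at x)"
  unfolding fw_def
  by (auto intro!: derivative_eq_intros simp: powr_diff field_simps)

lemma alg0:
  fixes s al be a b U0 U1 U2 :: real
  assumes "s > 0" "al = 0 \<or> al = a" "be = 0 \<or> be = b"
  shows "(s*(s+2))*(((- al/s - be/(s+2))*(U1 + (- al/s - be/(s+2))*U0) + (U2 + (al/s^2 + be/(s+2)^2)*U0 + (- al/s - be/(s+2))*U1)) + ((a + 1) / s + (b + 1) / (s+2))*(U1 + (- al/s - be/(s+2))*U0))
     = (s*(s+2))*U2 + (((a-2*al)+(b-2*be)+2)*(s+1) + ((a-2*al)-(b-2*be)))*U1 + (2*al*be - al*(b+1) - be*(a+1))*U0"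
proof -
  define i1 where "i1 = 1/s"
  define i2 where "i2 = 1/(s+2)"
  have h1: "s*i1 = 1" "(s+2)*i2 = 1" using assms(1) by (auto simp: i1_def i2_def)
  have h3: "al*(al-a) = 0" "be*(be-b) = 0" using assms(2,3) by auto
  have r: "- al/s = - (al*i1)" "al/s = al*i1" "be/(s+2) = be*i2" "al/s^2 = al*i1*i1" "be/(s+2)^2 = be*i2*i2"
     "(a + 1) / s = (a+1)*i1" "(b + 1) / (s+2) = (b+1)*i2"
    by (auto simp: i1_def i2_def power2_eq_square)
  show ?thesis unfolding r using h1 h3 by algebra
qed

lemma alg:
  fixes x al be a b U0 U1 U2 :: real
  assumes "x > 1" "al = 0 \<or> al = a" "be = 0 \<or> be = b"
  shows "(x^2-1)*(((- al/(x-1) - be/(x+1))*(U1 + (- al/(x-1) - be/(x+1))*U0) + (U2 + (al/(x-1)^2 + be/(x+1)^2)*U0 + (- al/(x-1) - be/(x+1))*U1)) + ((a + 1) / (x - 1) + (b + 1) / (x + 1))*(U1 + (- al/(x-1) - be/(x+1))*U0))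
     = (x^2-1)*U2 + (((a-2*al)+(b-2*be)+2)*x + ((a-2*al)-(b-2*be)))*U1 + (2*al*be - al*(b+1) - be*(a+1))*U0"
proof -
  define s where "s = x - 1"
  have x: "x = s + 1" and s: "s > 0" using assms(1) by (auto simp: s_def)
  have e: "x^2 - 1 = s*(s+2)" "x + 1 = s + 2" "x - 1 = s" by (auto simp: x power2_eq_square algebra_simps)
  show ?thesis unfolding e using alg0[OF s assms(2,3), of U1 U0 U2] by (simp add: x)
qed

definition Vf :: "nat \<Rightarrow> nat \<Rightarrow> real poly \<Rightarrow> real \<Rightarrow> real" where
  "Vf al be u x = poly (pderiv u) x + (- real al/(x-1) - real be/(x+1)) * poly u x"

lemma phi_deriv: "x > 1 \<Longrightarrow> ((\<lambda>y. fw al be y * poly u y) has_real_derivative fw al be x * Vf al be u x) (at x)"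
proof -
  assume x: "x > 1"
  have "((\<lambda>y. fw al be y * poly u y) has_real_derivative
     fw al be x * (- real al/(x-1) - real be/(x+1)) * poly u x + fw al be x * poly (pderiv u) x) (at x)"
    by (rule DERIV_cong[OF DERIV_mult[OF fw_deriv[OF x] poly_DERIV[of u x]]]) (simp add: algebra_simps)
  thus ?thesis by (rule DERIV_cong) (simp add: Vf_def algebra_simps)
qed

lemma dphi_deriv: "x > 1 \<Longrightarrow> ((\<lambda>y. fw al be y * Vf al be u y) has_real_derivative
   fw al be x * ((- real al/(x-1) - real be/(x+1))*(poly (pderiv u) x + (- real al/(x-1) - real be/(x+1))*poly u x)
     + (poly (pderiv (pderiv u)) x + (real al/(x-1)^2 + real be/(x+1)^2)*poly u x + (- real al/(x-1) - real be/(x+1))*poly (pderiv u) x))) (at x)"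
proof -
  assume x: "x > 1"
  have w: "((\<lambda>y. - real al/(y-1) - real be/(y+1)) has_real_derivative (real al/(x-1)^2 + real be/(x+1)^2)) (at x)"
    using x by (auto intro!: derivative_eq_intros simp: power2_eq_square field_simps)
  have v: "(Vf al be u has_real_derivative poly (pderiv (pderiv u)) x + ((real al/(x-1)^2 + real be/(x+1)^2)*poly u x + (- real al/(x-1) - real be/(x+1))*poly (pderiv u) x)) (at x)"
    unfolding Vf_def[abs_def]
    by (rule DERIV_cong[OF DERIV_add[OF poly_DERIV[of "pderiv u" x] DERIV_mult[OF w poly_DERIV[of u x]]]]) (simp add: algebra_simps)
  have "((\<lambda>y. fw al be y * Vf al be u y) has_real_derivative
     fw al be x * (- real al/(x-1) - real be/(x+1)) * Vf al be u x + fw al be x * (poly (pderiv (pderiv u)) x + ((real al/(x-1)^2 + real be/(x+1)^2)*poly u x + (- real al/(x-1) - real be/(x+1))*poly (pderiv u) x))) (at x)"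
    by (rule DERIV_cong[OF DERIV_mult[OF fw_deriv[OF x] v]]) (simp add: algebra_simps)
  thus ?thesis by (rule DERIV_cong) (simp add: Vf_def algebra_simps)
qed

lemma ev_gt1: "x > (1::real) \<Longrightarrow> eventually (\<lambda>y. y > 1) (nhds x)"
  by (rule eventually_nhds_in_open[of "{1<..}", simplified]) auto

lemma conj:
  assumes eq: "\<forall>y>1. \<phi> y = fw al be y * poly u y" and x: "x > 1"
  shows "\<phi> differentiable (at x)" and "deriv \<phi> differentiable (at x)"
    and "deriv \<phi> x = fw al be x * Vf al be u x"
    and "al = 0 \<or> al = a \<Longrightarrow> be = 0 \<or> be = b \<Longrightarrow> jacobiT a b \<phi> x = fw al be x *
       (poly (Lx (real a - 2*real al) (real b - 2*real be) u) x + (2*real al*real be - real al*(real b+1) - real be*(real a+1)) * poly u x)"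
proof -
  have ev: "eventually (\<lambda>z. \<phi> z = fw al be z * poly u z) (nhds y)" if "y > 1" for y
    using ev_gt1[OF that] by eventually_elim (use eq in auto)
  have D1: "DERIV \<phi> y :> fw al be y * Vf al be u y" if "y > 1" for y
    using phi_deriv[OF that] DERIV_cong_ev[OF refl ev[OF that] refl] by simp
  have dd: "deriv \<phi> y = fw al be y * Vf al be u y" if "y > 1" for y
    using D1[OF that] by (rule DERIV_imp_deriv)
  have ev2: "eventually (\<lambda>z. deriv \<phi> z = fw al be z * Vf al be u z) (nhds x)"
    using ev_gt1[OF x] by eventually_elim (use dd in auto)
  note D2 = dphi_deriv[OF x, of al be u, folded DERIV_cong_ev[OF refl ev2 refl]]
  show "\<phi> differentiable (at x)" using D1[OF x] real_differentiable_def by blast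
  show "deriv \<phi> differentiable (at x)" using D2 real_differentiable_def by blast
  show "deriv \<phi> x = fw al be x * Vf al be u x" by (rule dd[OF x])
  assume h: "al = 0 \<or> al = a" "be = 0 \<or> be = b"
  have h': "real al = 0 \<or> real al = real a" "real be = 0 \<or> real be = real b" using h by auto
  note dd2 = DERIV_imp_deriv[OF D2]
  show "jacobiT a b \<phi> x = fw al be x *
       (poly (Lx (real a - 2*real al) (real b - 2*real be) u) x + (2*real al*real be - real al*(real b+1) - real be*(real a+1)) * poly u x)"
  proof -
    have aux: "\<And>A f W p V. A*(f*W + p*(f*V)) = f*(A*(W+p*V::real))" by algebra
    show ?thesis
      unfolding jacobiT_def dd2 dd[OF x] aux Vf_def
      using alg[OF x h', of "poly (pderiv u) x" "poly u x" "poly (pderiv (pderiv u)) x"]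
      unfolding poly_Lx by simp
  qed
qed



lemma poly_zero_cofinite:
  fixes p :: "real poly"
  assumes "finite F" "\<forall>x>1. x \<notin> F \<longrightarrow> poly p x = 0"
  shows "p = 0"
proof (rule ccontr)
  assume "p \<noteq> 0"
  hence "finite {x. poly p x = 0}" by (rule poly_roots_finite)
  hence "finite ({x. poly p x = 0} \<union> F)" using assms(1) by simp
  moreover have "{1<..} \<subseteq> {x. poly p x = 0} \<union> F" using assms(2) by auto
  ultimately have "finite {1::real<..}" by (rule finite_subset[rotated])
  thus False using infinite_Ioi by blast
qed

lemma poly_zero_on: "(\<forall>x>1. poly p x = (0::real)) \<Longrightarrow> p = 0"
  using poly_zero_cofinite[of "{}" p] by simp

lemma poly_ratio_lim:
  fixes u :: "real poly"
  assumes "u \<noteq> 0"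
  shows "((\<lambda>x. x * poly (pderiv u) x / poly u x) \<longlongrightarrow> real (degree u)) at_top"
proof (cases "degree u = 0")
  case True
  then have "pderiv u = 0" by (simp add: pderiv_eq_0_iff)
  then show ?thesis using True by simp
next
  case False
  define n where "n = degree u"
  have dn: "degree (pderiv u) = n - 1" by (simp add: n_def degree_pderiv)
  have lc: "lead_coeff (pderiv u) = real n * lead_coeff u"
    using False by (simp add: dn coeff_pderiv n_def)
  have lim0: "((\<lambda>x::real. inverse x) \<longlongrightarrow> 0) at_top"
    by (rule tendsto_inverse_0_at_top[OF filterlim_ident])
  have l1: "((\<lambda>x. poly (reflect_poly (pderiv u)) (inverse x)) \<longlongrightarrow> real n * lead_coeff u) at_top"
    using tendsto_poly[OF lim0, of "reflect_poly (pderiv u)"] lc by simp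
  have l2: "((\<lambda>x. poly (reflect_poly u) (inverse x)) \<longlongrightarrow> lead_coeff u) at_top"
    using tendsto_poly[OF lim0, of "reflect_poly u"] by simp
  have lu: "lead_coeff u \<noteq> 0" using assms by simp
  have l: "((\<lambda>x. poly (reflect_poly (pderiv u)) (inverse x) / poly (reflect_poly u) (inverse x)) \<longlongrightarrow> real n) at_top"
    using tendsto_divide[OF l1 l2 lu] lu by simp
  have ev: "eventually (\<lambda>x. x * poly (pderiv u) x / poly u x = poly (reflect_poly (pderiv u)) (inverse x) / poly (reflect_poly u) (inverse x)) at_top"
    using eventually_gt_at_top[of 0]
  proof eventually_elim
    case (elim x)
    have x0: "x \<noteq> 0" using elim by simp
    have r1: "poly (reflect_poly (pderiv u)) (inverse x) = inverse x ^ (n-1) * poly (pderiv u) x"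
      using poly_reflect_poly_nz[of "inverse x" "pderiv u"] x0 by (simp add: dn)
    have r2: "poly (reflect_poly u) (inverse x) = inverse x ^ n * poly u x"
      using poly_reflect_poly_nz[of "inverse x" u] x0 by (simp add: n_def)
    obtain m where m: "n = Suc m" using False unfolding n_def using not0_implies_Suc by blast
    have "inverse x ^ m * poly (pderiv u) x / (inverse x ^ Suc m * poly u x) = x * poly (pderiv u) x / poly u x"
      using x0 by (simp add: power_inverse divide_simps)
    then show ?case unfolding r1 r2 m by simp
  qed
  show ?thesis unfolding n_def[symmetric] using tendsto_cong[OF ev] l by simp
qed

lemma lim_frac: "((\<lambda>x::real. x/(x+c)) \<longlongrightarrow> 1) at_top"
proof -
  have "filterlim (\<lambda>x::real. c + x) at_top at_top"
    by (rule filterlim_tendsto_add_at_top[OF tendsto_const filterlim_ident])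
  hence "((\<lambda>x. inverse (c + x)) \<longlongrightarrow> 0) at_top" by (rule tendsto_inverse_0_at_top)
  hence l: "((\<lambda>x. 1 - c * inverse (c + x)) \<longlongrightarrow> 1 - c * 0) at_top"
    by (intro tendsto_intros)
  have ev: "eventually (\<lambda>x. 1 - c * inverse (c + x) = x/(x+c)) at_top"
    using eventually_gt_at_top[of "-c"]
    by eventually_elim (simp add: field_simps)
  show ?thesis using tendsto_cong[OF ev] l by simp
qed

lemma ev_poly_nz: "u \<noteq> 0 \<Longrightarrow> eventually (\<lambda>x::real. poly u x \<noteq> 0) at_top"
proof -
  assume u: "u \<noteq> 0"
  define S where "S = {x. poly u x = 0}"
  have fS: "finite S" using poly_roots_finite[OF u] by (simp add: S_def)
  show ?thesis using eventually_gt_at_top[of "Max (insert 0 S)"]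
  proof eventually_elim
    case (elim x)
    show ?case
    proof
      assume "poly u x = 0"
      hence "x \<le> Max (insert 0 S)" using fS by (intro Max_ge) (auto simp: S_def)
      thus False using elim by simp
    qed
  qed
qed

lemma not_regular:
  assumes fin: "finite {x. x>1 \<and> \<phi> x = 0}"
    and DN: "\<forall>x>1. poly D x * deriv \<phi> x = poly N x * \<phi> x"
    and Dc: "poly D c = 0" and Nc: "poly N c \<noteq> 0"
  shows "\<not> logderiv_regular_at \<phi> c"
proof
  assume "logderiv_regular_at \<phi> c"
  then obtain N1 D1 where D1c: "poly D1 c \<noteq> 0" and DN1: "\<forall>x>1. poly D1 x * deriv \<phi> x = poly N1 x * \<phi> x"
    unfolding logderiv_regular_at_def by blast
  define P where "P = D1 * N - D * N1"
  have "\<forall>x>1. x \<notin> {x. x>1 \<and> \<phi> x = 0} \<longrightarrow> poly P x = 0"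
  proof (intro allI impI)
    fix x :: real assume x: "x > 1" and nx: "x \<notin> {x. x>1 \<and> \<phi> x = 0}"
    have "poly P x * \<phi> x = poly D1 x * (poly N x * \<phi> x) - poly D x * (poly N1 x * \<phi> x)"
      by (simp add: P_def algebra_simps)
    also have "\<dots> = poly D1 x * (poly D x * deriv \<phi> x) - poly D x * (poly D1 x * deriv \<phi> x)"
      using DN DN1 x by simp
    also have "\<dots> = 0" by (simp add: algebra_simps)
    finally show "poly P x = 0" using nx x by simp
  qed
  hence "P = 0" by (rule poly_zero_cofinite[OF fin])
  hence "poly P c = 0" by simp
  thus False using D1c Nc Dc by (simp add: P_def)
qed

lemma rep_props:
  assumes eq: "\<forall>y>1. \<phi> y = fw al be y * poly u y" and u1: "poly u 1 \<noteq> 0" and um1: "poly u (-1) \<noteq> 0"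
  shows "nonzero_on \<phi>" and "logderiv_rational \<phi>"
    and "logderiv_regular_at \<phi> 1 \<longleftrightarrow> al = 0" and "logderiv_regular_at \<phi> (-1) \<longleftrightarrow> be = 0"
    and "has_eig_degree \<phi> (real (degree u) - real al - real be)"
proof -
  have u0: "u \<noteq> 0" using u1 by auto
  have dphi: "deriv \<phi> x = fw al be x * Vf al be u x" if "x > 1" for x
    using conj(3)[OF eq that] .
  have fin: "finite {x. x>1 \<and> \<phi> x = 0}"
  proof (rule finite_subset[OF _ poly_roots_finite[OF u0]])
    show "{x. x>1 \<and> \<phi> x = 0} \<subseteq> {x. poly u x = 0}"
    proof safe
      fix x assume "x > (1::real)" "\<phi> x = 0"
      thus "poly u x = 0" using eq fw_pos[of x al be] by simp
    qed
  qed
  show "nonzero_on \<phi>"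
  proof -
    obtain x where "x > 1" "poly u x \<noteq> 0" using poly_zero_on[of u] u0 by blast
    thus ?thesis unfolding nonzero_on_def using eq fw_pos[of x al be] by auto
  qed
  define D where "D = [:-1,0,1:] * u"
  define N where "N = [:-1,0,1:] * pderiv u - smult (real al) ([:1,1:] * u) - smult (real be) ([:-1,1:] * u)"
  have DN: "\<forall>x>1. poly D x * deriv \<phi> x = poly N x * \<phi> x"
  proof (intro allI impI)
    fix x :: real assume x: "x > 1"
    have "x - 1 \<noteq> 0" "x + 1 \<noteq> 0" "x * x - 1 \<noteq> 0" using x less_1_mult[of x x] by auto
    thus "poly D x * deriv \<phi> x = poly N x * \<phi> x"
      unfolding dphi[OF x] eq[rule_format, OF x] D_def N_def Vf_def
      by (simp add: field_simps)
  qed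
  show "logderiv_rational \<phi>" unfolding logderiv_rational_def
  proof (rule exI[of _ N], rule exI[of _ D], intro conjI)
    show "D \<noteq> 0" unfolding D_def using u0 by (subst mult_eq_0_iff) simp
  qed (use DN in auto)
  show "logderiv_regular_at \<phi> 1 \<longleftrightarrow> al = 0"
  proof
    assume "logderiv_regular_at \<phi> 1"
    show "al = 0"
    proof (rule ccontr)
      assume "al \<noteq> 0"
      have "\<not> logderiv_regular_at \<phi> 1"
        by (rule not_regular[OF fin DN]) (use \<open>al \<noteq> 0\<close> u1 in \<open>simp_all add: D_def N_def\<close>)
      thus False using \<open>logderiv_regular_at \<phi> 1\<close> by simp
    qed
  next
    assume al: "al = 0"
    define D1 where "D1 = [:1,1:] * u"
    define N1 where "N1 = [:1,1:] * pderiv u - smult (real be) u"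
    have "\<forall>x>1. poly D1 x * deriv \<phi> x = poly N1 x * \<phi> x"
    proof (intro allI impI)
      fix x :: real assume x: "x > 1"
      have "x - 1 \<noteq> 0" "x + 1 \<noteq> 0" "x * x - 1 \<noteq> 0" using x less_1_mult[of x x] by auto
      thus "poly D1 x * deriv \<phi> x = poly N1 x * \<phi> x"
        unfolding dphi[OF x] eq[rule_format, OF x] D1_def N1_def Vf_def al
        by (simp add: field_simps)
    qed
    moreover have "poly D1 1 \<noteq> 0" using u1 by (simp add: D1_def)
    ultimately show "logderiv_regular_at \<phi> 1" unfolding logderiv_regular_at_def by blast
  qed
  show "logderiv_regular_at \<phi> (-1) \<longleftrightarrow> be = 0"
  proof
    assume "logderiv_regular_at \<phi> (-1)"
    show "be = 0"
    proof (rule ccontr)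
      assume "be \<noteq> 0"
      have "\<not> logderiv_regular_at \<phi> (-1)"
        by (rule not_regular[OF fin DN]) (use \<open>be \<noteq> 0\<close> um1 in \<open>simp_all add: D_def N_def\<close>)
      thus False using \<open>logderiv_regular_at \<phi> (-1)\<close> by simp
    qed
  next
    assume be: "be = 0"
    define D1 where "D1 = [:-1,1:] * u"
    define N1 where "N1 = [:-1,1:] * pderiv u - smult (real al) u"
    have "\<forall>x>1. poly D1 x * deriv \<phi> x = poly N1 x * \<phi> x"
    proof (intro allI impI)
      fix x :: real assume x: "x > 1"
      have "x - 1 \<noteq> 0" "x + 1 \<noteq> 0" "x * x - 1 \<noteq> 0" using x less_1_mult[of x x] by auto
      thus "poly D1 x * deriv \<phi> x = poly N1 x * \<phi> x"
        unfolding dphi[OF x] eq[rule_format, OF x] D1_def N1_def Vf_def be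
        by (simp add: field_simps)
    qed
    moreover have "poly D1 (-1) \<noteq> 0" using um1 by (simp add: D1_def)
    ultimately show "logderiv_regular_at \<phi> (-1)" unfolding logderiv_regular_at_def by blast
  qed
  show "has_eig_degree \<phi> (real (degree u) - real al - real be)"
    unfolding has_eig_degree_def
  proof -
    have l: "((\<lambda>x. x * poly (pderiv u) x / poly u x - real al * (x/(x+(-1))) - real be * (x/(x+1)))
      \<longlongrightarrow> real (degree u) - real al * 1 - real be * 1) at_top"
      by (intro tendsto_intros poly_ratio_lim[OF u0] lim_frac)
    have ev: "eventually (\<lambda>x. x * poly (pderiv u) x / poly u x - real al * (x/(x+(-1))) - real be * (x/(x+1))
       = x * (deriv \<phi> x / \<phi> x)) at_top"
      using eventually_gt_at_top[of 1] ev_poly_nz[OF u0]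
    proof eventually_elim
      case (elim x)
      have x: "x > 1" using elim by simp
      have "x - 1 \<noteq> 0" "x + 1 \<noteq> 0" "fw al be x \<noteq> 0" "x * x - 1 \<noteq> 0" using x fw_pos[OF x, of al be] less_1_mult[of x x] by auto
      thus ?case unfolding dphi[OF x] eq[rule_format, OF x] Vf_def using elim
        by (simp add: field_simps)
    qed
    show "((\<lambda>x. x * (deriv \<phi> x / \<phi> x)) \<longlongrightarrow> real (degree u) - real al - real be) at_top"
      using tendsto_cong[OF ev] l by simp
  qed
qed



lemma diff_DERIV: "(f::real\<Rightarrow>real) differentiable (at x) \<Longrightarrow> DERIV f x :> deriv f x"
proof -
  assume "f differentiable (at x)"
  then obtain D where D: "DERIV f x :> D" unfolding real_differentiable_def by blast
  with DERIV_imp_deriv[OF D] show ?thesis by simp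
qed

lemma E_lin:
  assumes h1: "\<phi>1 \<in> jacobi_eigenspace a b lam" and h2: "\<phi>2 \<in> jacobi_eigenspace a b lam"
  shows "(\<lambda>x. c1 * \<phi>1 x + c2 * \<phi>2 x) \<in> jacobi_eigenspace a b lam"
proof -
  let ?\<psi> = "\<lambda>x. c1 * \<phi>1 x + c2 * \<phi>2 x"
  have d1: "DERIV \<phi>1 y :> deriv \<phi>1 y" "DERIV (deriv \<phi>1) y :> deriv (deriv \<phi>1) y"
      "DERIV \<phi>2 y :> deriv \<phi>2 y" "DERIV (deriv \<phi>2) y :> deriv (deriv \<phi>2) y"
      "jacobiT a b \<phi>1 y = lam * \<phi>1 y" "jacobiT a b \<phi>2 y = lam * \<phi>2 y" if "y > 1" for y
    using h1 h2 that unfolding jacobi_eigenspace_def by (auto intro!: diff_DERIV)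
  have D1: "DERIV ?\<psi> y :> c1 * deriv \<phi>1 y + c2 * deriv \<phi>2 y" if "y > 1" for y
    using DERIV_add[OF DERIV_cmult[OF d1(1)[OF that]] DERIV_cmult[OF d1(3)[OF that]]] by simp
  have dd: "deriv ?\<psi> y = c1 * deriv \<phi>1 y + c2 * deriv \<phi>2 y" if "y > 1" for y
    using D1[OF that] by (rule DERIV_imp_deriv)
  show ?thesis unfolding jacobi_eigenspace_def
  proof (intro CollectI allI impI conjI)
    fix x :: real assume x: "x > 1"
    have ev2: "eventually (\<lambda>z. deriv ?\<psi> z = c1 * deriv \<phi>1 z + c2 * deriv \<phi>2 z) (nhds x)"
      using ev_gt1[OF x] by eventually_elim (use dd in auto)
    have D2: "DERIV (\<lambda>z. c1 * deriv \<phi>1 z + c2 * deriv \<phi>2 z) x :> c1 * deriv (deriv \<phi>1) x + c2 * deriv (deriv \<phi>2) x"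
      using DERIV_add[OF DERIV_cmult[OF d1(2)[OF x]] DERIV_cmult[OF d1(4)[OF x]]] by simp
    note D2' = D2[folded DERIV_cong_ev[OF refl ev2 refl]]
    show "?\<psi> differentiable (at x)" using D1[OF x] real_differentiable_def by blast
    show "deriv ?\<psi> differentiable (at x)" using D2' real_differentiable_def by blast
    show "jacobiT a b ?\<psi> x = lam * ?\<psi> x"
    proof -
      have "jacobiT a b ?\<psi> x = c1 * jacobiT a b \<phi>1 x + c2 * jacobiT a b \<phi>2 x"
        unfolding jacobiT_def DERIV_imp_deriv[OF D2'] dd[OF x] by (simp add: algebra_simps)
      thus ?thesis using d1(5,6)[OF x] by (simp add: algebra_simps)
    qed
  qed
qed

lemma alg2:
  fixes x i1 i2 A B ra rb f1 f2 g1 g2 lam :: real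
  assumes "(x-1)*i1 = 1" "(x+1)*i2 = 1"
  shows "((ra + 1) * A * (B * (x + 1)) + A * (x - 1) * ((rb + 1) * B)) * (f1 * g2 - g1 * f2) +
     A * (x - 1) * (B * (x + 1)) * (f1 * (lam * f2 * i1 * i2 - ((ra + 1) * i1 + (rb + 1) * i2) * g2) -
      (lam * f1 * i1 * i2 - ((ra + 1) * i1 + (rb + 1) * i2) * g1) * f2) = 0"
  using assms by algebra

lemma wr_const:
  assumes h1: "\<phi>1 \<in> jacobi_eigenspace a b lam" and h2: "\<phi>2 \<in> jacobi_eigenspace a b lam"
  shows "\<exists>K. \<forall>x>1. (x-1)^(a+1)*(x+1)^(b+1)*(\<phi>1 x * deriv \<phi>2 x - deriv \<phi>1 x * \<phi>2 x) = K"
proof -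
  let ?g = "\<lambda>x. (x-1)^(a+1)*(x+1)^(b+1)*(\<phi>1 x * deriv \<phi>2 x - deriv \<phi>1 x * \<phi>2 x)"
  have "\<exists>c. \<forall>x\<in>{1<..}. ?g x = c"
  proof (rule has_field_derivative_zero_constant)
    show "convex {1::real<..}" by simp
    fix x :: real assume "x \<in> {1<..}"
    hence x: "x > 1" by simp
    have d1: "DERIV \<phi>1 x :> deriv \<phi>1 x" "DERIV (deriv \<phi>1) x :> deriv (deriv \<phi>1) x"
      "DERIV \<phi>2 x :> deriv \<phi>2 x" "DERIV (deriv \<phi>2) x :> deriv (deriv \<phi>2) x"
      "jacobiT a b \<phi>1 x = lam * \<phi>1 x" "jacobiT a b \<phi>2 x = lam * \<phi>2 x"
      using h1 h2 x unfolding jacobi_eigenspace_def by (auto intro!: diff_DERIV)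
    have D: "DERIV ?g x :> (real (a+1) * (x-1)^a * (x+1)^(b+1) + (x-1)^(a+1) * (real (b+1) * (x+1)^b)) * (\<phi>1 x * deriv \<phi>2 x - deriv \<phi>1 x * \<phi>2 x)
       + (x-1)^(a+1)*(x+1)^(b+1) * (\<phi>1 x * deriv (deriv \<phi>2) x - deriv (deriv \<phi>1) x * \<phi>2 x)"
      proof -
      have p1: "DERIV (\<lambda>x. (x-1)^(a+1)) x :> real (a+1) * (x-1)^a"
        by (auto intro!: derivative_eq_intros) (cases a, auto simp: algebra_simps)
      have p2: "DERIV (\<lambda>x. (x+1)^(b+1)) x :> real (b+1) * (x+1)^b"
        by (auto intro!: derivative_eq_intros) (cases b, auto simp: algebra_simps)
      note w = DERIV_diff[OF DERIV_mult[OF d1(1) d1(4)] DERIV_mult[OF d1(2) d1(3)]]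
      show ?thesis by (rule DERIV_cong[OF DERIV_mult[OF DERIV_mult[OF p1 p2] w]]) (simp add: algebra_simps)
    qed
    have nz: "x - 1 \<noteq> 0" "x + 1 \<noteq> 0" "x * x - 1 \<noteq> 0" using x less_1_mult[of x x] by auto
    have nz2: "x^2 - 1 \<noteq> 0" using nz by (simp add: power2_eq_square)
    have e1: "deriv (deriv \<phi>1) x = lam * \<phi>1 x / (x^2-1) - ((real a + 1) / (x - 1) + (real b + 1) / (x + 1)) * deriv \<phi>1 x"
    proof -
      have "deriv (deriv \<phi>1) x + ((real a + 1) / (x - 1) + (real b + 1) / (x + 1)) * deriv \<phi>1 x = lam * \<phi>1 x / (x^2-1)"
        using d1(5) nz2 unfolding jacobiT_def by (intro nonzero_eq_divide_eq[THEN iffD2]) (simp_all add: mult.commute)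
      thus ?thesis by linarith
    qed
    have e2: "deriv (deriv \<phi>2) x = lam * \<phi>2 x / (x^2-1) - ((real a + 1) / (x - 1) + (real b + 1) / (x + 1)) * deriv \<phi>2 x"
    proof -
      have "deriv (deriv \<phi>2) x + ((real a + 1) / (x - 1) + (real b + 1) / (x + 1)) * deriv \<phi>2 x = lam * \<phi>2 x / (x^2-1)"
        using d1(6) nz2 unfolding jacobiT_def by (intro nonzero_eq_divide_eq[THEN iffD2]) (simp_all add: mult.commute)
      thus ?thesis by linarith
    qed
    define i1 where "i1 = 1/(x-1)"
    define i2 where "i2 = 1/(x+1)"
    have h: "(x-1)*i1 = 1" "(x+1)*i2 = 1" using nz by (auto simp: i1_def i2_def)
    have r: "lam * \<phi>1 x / (x^2-1) = lam * \<phi>1 x * i1 * i2" "lam * \<phi>2 x / (x^2-1) = lam * \<phi>2 x * i1 * i2"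
      "(real a + 1) / (x - 1) = (real a + 1) * i1" "(real b + 1) / (x + 1) = (real b + 1) * i2"
      by (auto simp: i1_def i2_def power2_eq_square algebra_simps)
    have pw: "(x-1)^(a+1) = (x-1)^a * (x-1)" "(x+1)^(b+1) = (x+1)^b * (x+1)" by simp_all
    have "(real (a+1) * (x-1)^a * (x+1)^(b+1) + (x-1)^(a+1) * (real (b+1) * (x+1)^b)) * (\<phi>1 x * deriv \<phi>2 x - deriv \<phi>1 x * \<phi>2 x)
       + (x-1)^(a+1)*(x+1)^(b+1) * (\<phi>1 x * deriv (deriv \<phi>2) x - deriv (deriv \<phi>1) x * \<phi>2 x) = 0"
      unfolding e1 e2 r pw of_nat_add of_nat_1 using alg2[OF h] by simp
    with D show "(?g has_field_derivative 0) (at x within {1<..})"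
      by (simp add: has_field_derivative_at_within)
  qed
  thus ?thesis by auto
qed



lemma typed_of_rep:
  assumes eq: "\<forall>y>1. \<phi> y = fw al be y * poly u y" and u1: "poly u 1 \<noteq> 0" and um1: "poly u (-1) \<noteq> 0"
    and t: "t = (if al > 0 \<and> be > 0 then 2 else if al > 0 then 3 else if be > 0 then 4 else 1)"
    and d: "d = real (degree u) - real al - real be" and i: "i = d - type_offset a b t"
  shows "typed_eigenfunction a b \<phi> t i d"
proof -
  note r = rep_props[OF eq u1 um1]
  have at: "asym_type \<phi> = t" unfolding asym_type_def r(3,4) t by auto
  show ?thesis unfolding typed_eigenfunction_def has_eig_index_def at
    using r(1,2,5) d i by (intro conjI exI[of _ d]) simp_all
qed

lemma fw_inv: "x > 1 \<Longrightarrow> fw al be x * ((x-1)^al * (x+1)^be) = 1"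
  by (simp add: fw_def powr_minus powr_realpow field_simps)

lemma fw_split: "x > 1 \<Longrightarrow> fw al 0 x = fw al be x * (x+1)^be" "x > 1 \<Longrightarrow> fw 0 be x = fw al be x * (x-1)^al"
  by (simp_all add: fw_def powr_minus powr_realpow field_simps)


theorem mainTheorem20:
  fixes a b k :: nat
  assumes "b \<le> a" and "k < b"
  defines "E \<equiv> jacobi_eigenspace a b ((real k + 1) * (real k - real a - real b))"
  shows "(\<exists>\<phi>1\<in>E. \<exists>\<phi>2\<in>E. lin_indep2 \<phi>1 \<phi>2 \<and>
            (\<forall>\<phi>\<in>E. \<exists>c1 c2. \<forall>x>1. \<phi> x = c1 * \<phi>1 x + c2 * \<phi>2 x))
       \<and> (\<forall>\<phi>\<in>E. rational_fun \<phi>)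
       \<and> (\<exists>\<psi>2\<in>E. \<exists>\<psi>3\<in>E. \<exists>\<psi>4\<in>E.
            nonzero_on \<psi>2 \<and> nonzero_on \<psi>3 \<and> nonzero_on \<psi>4
          \<and> \<not> in_line \<psi>2 \<psi>3 \<and> \<not> in_line \<psi>2 \<psi>4 \<and> \<not> in_line \<psi>3 \<psi>4
          \<and> (\<forall>\<phi>\<in>E. in_line \<psi>2 \<phi> \<and> nonzero_on \<phi> \<longrightarrow>
               typed_eigenfunction a b \<phi> 2 (real k) (real k - real a - real b))
          \<and> (\<forall>\<phi>\<in>E. in_line \<psi>3 \<phi> \<and> nonzero_on \<phi> \<longrightarrow>
               typed_eigenfunction a b \<phi> 3 (real a - real k - 1) (- real k - 1))
          \<and> (\<forall>\<phi>\<in>E. in_line \<psi>4 \<phi> \<and> nonzero_on \<phi> \<longrightarrow>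
               typed_eigenfunction a b \<phi> 4 (real b - real k - 1) (- real k - 1))
          \<and> (\<forall>\<phi>\<in>E. \<not> in_line \<psi>2 \<phi> \<and> \<not> in_line \<psi>3 \<phi> \<and> \<not> in_line \<psi>4 \<phi> \<longrightarrow>
               typed_eigenfunction a b \<phi> 2 (real a + real b - real k - 1) (- real k - 1)))"
proof -
  have kb: "k + 1 \<le> b" and ka: "k + 1 \<le> a" and a0: "a > 0" and b0: "b > 0" using assms by auto
  define lam where "lam = (real k + 1) * (real k - real a - real b)"
  have Edef: "E = jacobi_eigenspace a b lam" using E_def lam_def by simp
  define m where "m = b - k - 1"
  define m' where "m' = a - k - 1"
  define n where "n = a + b - k - 1"
  have rm: "real m = real b - real k - 1" using kb by (simp add: m_def of_nat_diff)
  have rm': "real m' = real a - real k - 1" using ka by (simp add: m'_def of_nat_diff)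
  have rn: "real n = real a + real b - real k - 1" using ka by (simp add: n_def of_nat_diff)
  obtain p where pL: "Lx (real a) (- real b) p = smult (real m * (real m + real a + - real b + 1)) p"
      and pd: "degree p = m" and p1: "poly p 1 = 1"
  proof -
    have "\<exists>P. Lx (real a) (- real b) P = smult (real m * (real m + real a + - real b + 1)) P \<and> degree P = m \<and> poly P 1 = 1"
    proof (rule jac_exists[where e=1 and g="real a"])
      show "\<forall>j<m. real m + real j + real a + - real b + 1 \<noteq> 0" using rm assms by auto
    qed simp_all
    thus ?thesis using that by blast
  qed
  have p0: "p \<noteq> 0" using p1 by auto
  have pm1: "poly p (-1) \<noteq> 0"
  proof (rule jac_nonzero[where g="- real b", OF _ _ pL p0])
    show "\<forall>i<degree p. real i + - real b + 1 \<noteq> 0" using pd m_def by auto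
  qed simp_all
  obtain q where qL: "Lx (- real a) (real b) q = smult (real m' * (real m' + - real a + real b + 1)) q"
      and qd: "degree q = m'" and qm1: "poly q (-1) = 1"
  proof -
    have "\<exists>P. Lx (- real a) (real b) P = smult (real m' * (real m' + - real a + real b + 1)) P \<and> degree P = m' \<and> poly P (-1) = 1"
    proof (rule jac_exists[where e="-1" and g="real b"])
      show "\<forall>j<m'. real m' + real j + - real a + real b + 1 \<noteq> 0" using rm' assms by auto
    qed simp_all
    thus ?thesis using that by blast
  qed
  have q0: "q \<noteq> 0" using qm1 by auto
  have q1: "poly q 1 \<noteq> 0"
  proof (rule jac_nonzero[where g="- real a", OF _ _ qL q0])
    show "\<forall>i<degree q. real i + - real a + 1 \<noteq> 0" using qd m'_def by auto
  qed simp_all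
  define \<psi>3 where "\<psi>3 = (\<lambda>x. fw a 0 x * poly q x)"
  define \<psi>4 where "\<psi>4 = (\<lambda>x. fw 0 b x * poly p x)"
  have eq3: "\<forall>y>1. \<psi>3 y = fw a 0 y * poly q y" by (simp add: \<psi>3_def)
  have eq4: "\<forall>y>1. \<psi>4 y = fw 0 b y * poly p y" by (simp add: \<psi>4_def)
  have \<psi>3E: "\<psi>3 \<in> E"
    unfolding Edef jacobi_eigenspace_def
  proof (intro CollectI allI impI conjI)
    fix x :: real assume x: "x > 1"
    show "\<psi>3 differentiable (at x)" by (rule conj(1)[OF eq3 x])
    show "deriv \<psi>3 differentiable (at x)" by (rule conj(2)[OF eq3 x])
    have "jacobiT a b \<psi>3 x = fw a 0 x * (poly (Lx (real a - 2*real a) (real b - 2*real (0::nat)) q) x + (2*real a*real (0::nat) - real a*(real b+1) - real (0::nat)*(real a+1)) * poly q x)"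
      by (rule conj(4)[OF eq3 x]) simp_all
    also have "Lx (real a - 2*real a) (real b - 2*real (0::nat)) q = Lx (- real a) (real b) q" by simp
    finally show "jacobiT a b \<psi>3 x = lam * \<psi>3 x" unfolding qL \<psi>3_def lam_def rm' by (simp add: algebra_simps)
  qed
  have \<psi>4E: "\<psi>4 \<in> E"
    unfolding Edef jacobi_eigenspace_def
  proof (intro CollectI allI impI conjI)
    fix x :: real assume x: "x > 1"
    show "\<psi>4 differentiable (at x)" by (rule conj(1)[OF eq4 x])
    show "deriv \<psi>4 differentiable (at x)" by (rule conj(2)[OF eq4 x])
    have "jacobiT a b \<psi>4 x = fw 0 b x * (poly (Lx (real a - 2*real (0::nat)) (real b - 2*real b) p) x + (2*real (0::nat)*real b - real (0::nat)*(real b+1) - real b*(real a+1)) * poly p x)"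
      by (rule conj(4)[OF eq4 x]) simp_all
    also have "Lx (real a - 2*real (0::nat)) (real b - 2*real b) p = Lx (real a) (- real b) p" by simp
    finally show "jacobiT a b \<psi>4 x = lam * \<psi>4 x" unfolding pL \<psi>4_def lam_def rm by (simp add: algebra_simps)
  qed
  define U where "U = (\<lambda>c3 c4. smult c3 ([:1,1:]^b * q) + smult c4 ([:-1,1:]^a * p))"
  have comb: "\<forall>y>1. c3 * \<psi>3 y + c4 * \<psi>4 y = fw a b y * poly (U c3 c4) y" for c3 c4
  proof (intro allI impI)
    fix y :: real assume y: "y > 1"
    show "c3 * \<psi>3 y + c4 * \<psi>4 y = fw a b y * poly (U c3 c4) y"
      unfolding \<psi>3_def \<psi>4_def U_def fw_split(1)[OF y, of a b] fw_split(2)[OF y, of b a]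
      by (simp add: algebra_simps)
  qed
  have U1: "poly (U c3 c4) 1 = c3 * 2^b * poly q 1" for c3 c4 using a0 by (simp add: U_def)
  have Um1: "poly (U c3 c4) (-1) = c4 * (-2)^a * poly p (-1)" for c3 c4 using b0 by (simp add: U_def)
  have d3: "degree ([:1,1:]^b * q) = n" using q0 qd ka by (simp add: degree_mult_eq degree_power_eq n_def m'_def)
  have d4: "degree ([:-1,1:]^a * p) = n" using p0 pd kb by (simp add: degree_mult_eq degree_power_eq n_def m_def)
  have l3: "lead_coeff ([:1,1:]^b * q) = lead_coeff q" by (simp add: lead_coeff_mult lead_coeff_power)
  have l4: "lead_coeff ([:-1,1:]^a * p) = lead_coeff p" by (simp add: lead_coeff_mult lead_coeff_power)
  have degU: "degree (U c3 c4) \<le> n" for c3 c4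
    unfolding U_def by (rule order.trans[OF degree_add_le_max]) (use d3 d4 degree_smult_le order.trans in \<open>fastforce\<close>)
  have coeffU: "coeff (U c3 c4) n = c3 * lead_coeff q + c4 * lead_coeff p" for c3 c4
    using l3 l4 d3 d4 by (simp add: U_def)
  have lcp: "lead_coeff p \<noteq> 0" and lcq: "lead_coeff q \<noteq> 0" using p0 q0 by auto
  have UE: "(\<lambda>x. c3 * \<psi>3 x + c4 * \<psi>4 x) \<in> E" for c3 c4 using E_lin[OF \<psi>3E[unfolded Edef] \<psi>4E[unfolded Edef]] Edef by simp
  have UL: "Lx (- real a) (- real b) (U c3 c4) = smult (lam + real a + real b) (U c3 c4)" for c3 c4
  proof -
    have eq: "\<forall>y>1. (\<lambda>x. c3 * \<psi>3 x + c4 * \<psi>4 x) y = fw a b y * poly (U c3 c4) y" using comb by simp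
    have "\<forall>x>1. poly (Lx (- real a) (- real b) (U c3 c4) - smult (lam + real a + real b) (U c3 c4)) x = 0"
    proof (intro allI impI)
      fix x :: real assume x: "x > 1"
      have "jacobiT a b (\<lambda>x. c3 * \<psi>3 x + c4 * \<psi>4 x) x = lam * (fw a b x * poly (U c3 c4) x)"
        using UE[of c3 c4] x eq unfolding Edef jacobi_eigenspace_def by auto
      moreover have "jacobiT a b (\<lambda>x. c3 * \<psi>3 x + c4 * \<psi>4 x) x = fw a b x * (poly (Lx (real a - 2*real a) (real b - 2*real b) (U c3 c4)) x + (2*real a*real b - real a*(real b+1) - real b*(real a+1)) * poly (U c3 c4) x)"
        by (rule conj(4)[OF eq x]) simp_all
      ultimately have "fw a b x * (poly (Lx (- real a) (- real b) (U c3 c4)) x - (lam + real a + real b) * poly (U c3 c4) x) = 0"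
        by (simp add: algebra_simps)
      thus "poly (Lx (- real a) (- real b) (U c3 c4) - smult (lam + real a + real b) (U c3 c4)) x = 0"
        using fw_pos[OF x, of a b] by simp
    qed
    hence "Lx (- real a) (- real b) (U c3 c4) - smult (lam + real a + real b) (U c3 c4) = 0" by (rule poly_zero_on)
    thus ?thesis by simp
  qed
  have Udeg: "degree (U c3 c4) = k \<or> degree (U c3 c4) = n" if "U c3 c4 \<noteq> 0" for c3 c4
  proof -
    have "real (degree (U c3 c4)) * (real (degree (U c3 c4)) + - real a + - real b + 1) = lam + real a + real b"
      by (rule Lx_degree[OF UL that])
    hence "(real (degree (U c3 c4)) - real k) * (real (degree (U c3 c4)) - (real a + real b - real k - 1)) = 0"
      unfolding lam_def by (simp add: algebra_simps)
    hence "real (degree (U c3 c4)) = real k \<or> real (degree (U c3 c4)) = real n" using rn by auto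
    thus ?thesis by (simp only: of_nat_eq_iff)
  qed
  have degn: "degree (U c3 c4) = n" if "c3 * lead_coeff q + c4 * lead_coeff p \<noteq> 0" for c3 c4
    using degU[of c3 c4] le_degree[of "U c3 c4" n] that coeffU[of c3 c4] by simp
  have degk: "degree (U c3 c4) = k" if "c3 * lead_coeff q + c4 * lead_coeff p = 0" "c3 \<noteq> 0" for c3 c4
  proof -
    have "U c3 c4 \<noteq> 0" using U1[of c3 c4] that(2) q1 by auto
    moreover have "degree (U c3 c4) \<noteq> n"
    proof
      assume "degree (U c3 c4) = n"
      hence "lead_coeff (U c3 c4) = 0" using coeffU[of c3 c4] that(1) by simp
      thus False using \<open>U c3 c4 \<noteq> 0\<close> by simp
    qed
    ultimately show ?thesis using Udeg by blast
  qed
  obtain K0 where K0: "\<forall>x>1. (x-1)^(a+1)*(x+1)^(b+1)*(\<psi>3 x * deriv \<psi>4 x - deriv \<psi>3 x * \<psi>4 x) = K0"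
    using wr_const[OF \<psi>3E[unfolded Edef] \<psi>4E[unfolded Edef]] by blast
  define R where "R = [:-1,0,1:]*(q*pderiv p - pderiv q*p) - smult (real b) ([:-1,1:]*q*p) + smult (real a) ([:1,1:]*q*p)"
  have RK: "\<forall>x>1. poly (R - [:K0:]) x = 0"
  proof (intro allI impI)
    fix x :: real assume x: "x > 1"
    define i1 where "i1 = 1/(x-1)"
    define i2 where "i2 = 1/(x+1)"
    define A where "A = (x-1)^a"
    define B where "B = (x+1)^b"
    define F3 where "F3 = fw a 0 x"
    define F4 where "F4 = fw 0 b x"
    have h: "(x-1)*i1 = 1" "(x+1)*i2 = 1" using x by (auto simp: i1_def i2_def)
    have hF: "F3*A = 1" "F4*B = 1" using fw_inv[OF x, of a 0] fw_inv[OF x, of 0 b] by (simp_all add: F3_def F4_def A_def B_def)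
    have d3: "deriv \<psi>3 x = F3*(poly (pderiv q) x - real a*poly q x*i1)"
      unfolding conj(3)[OF eq3 x] Vf_def F3_def i1_def by (simp add: algebra_simps)
    have d4: "deriv \<psi>4 x = F4*(poly (pderiv p) x - real b*poly p x*i2)"
      unfolding conj(3)[OF eq4 x] Vf_def F4_def i2_def by (simp add: algebra_simps)
    have "K0 = (x-1)^(a+1)*(x+1)^(b+1)*(\<psi>3 x * deriv \<psi>4 x - deriv \<psi>3 x * \<psi>4 x)" using K0 x by simp
    also have "\<dots> = A*(x-1)*(B*(x+1))*((F3*poly q x)*(F4*(poly (pderiv p) x - real b*poly p x*i2)) - (F3*(poly (pderiv q) x - real a*poly q x*i1))*(F4*poly p x))"
      unfolding d3 d4 eq3[rule_format, OF x] eq4[rule_format, OF x] A_def B_def F3_def F4_def by simp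
    also have "\<dots> = (x*x-1)*(poly q x*poly (pderiv p) x - poly (pderiv q) x*poly p x) - real b*((x-1)*poly q x*poly p x) + real a*((x+1)*poly q x*poly p x)"
      using h hF by algebra
    also have "\<dots> = poly R x" by (simp add: R_def algebra_simps)
    finally show "poly (R - [:K0:]) x = 0" by simp
  qed
  have "R - [:K0:] = 0" using RK by (rule poly_zero_on)
  hence "R = [:K0:]" by simp
  hence "K0 = poly R 1" by simp
  hence K0v: "K0 = 2 * real a * poly q 1 * poly p 1" by (simp add: R_def)
  have K0nz: "K0 \<noteq> 0" using K0v a0 q1 p1 by simp
  have span: "\<exists>c3 c4. \<forall>x>1. \<phi> x = c3 * \<psi>3 x + c4 * \<psi>4 x" if phiE: "\<phi> \<in> E" for \<phi>
  proof -
    obtain K1 where K1: "\<forall>x>1. (x-1)^(a+1)*(x+1)^(b+1)*(\<phi> x * deriv \<psi>4 x - deriv \<phi> x * \<psi>4 x) = K1"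
      using wr_const[OF phiE[unfolded Edef] \<psi>4E[unfolded Edef]] by blast
    obtain K2 where K2: "\<forall>x>1. (x-1)^(a+1)*(x+1)^(b+1)*(\<psi>3 x * deriv \<phi> x - deriv \<psi>3 x * \<phi> x) = K2"
      using wr_const[OF \<psi>3E[unfolded Edef] phiE[unfolded Edef]] by blast
    have "\<forall>x>1. \<phi> x = (K1/K0) * \<psi>3 x + (K2/K0) * \<psi>4 x"
    proof (intro allI impI)
      fix x :: real assume x: "x > 1"
      have "K0 * \<phi> x = K1 * \<psi>3 x + K2 * \<psi>4 x"
        unfolding K0[rule_format, OF x, symmetric] K1[rule_format, OF x, symmetric] K2[rule_format, OF x, symmetric]
        by (simp add: algebra_simps)
      thus "\<phi> x = (K1/K0) * \<psi>3 x + (K2/K0) * \<psi>4 x" using K0nz by (simp add: field_simps)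
    qed
    thus ?thesis by blast
  qed
  have indep: "lin_indep2 \<psi>3 \<psi>4" unfolding lin_indep2_def
  proof (intro allI impI)
    fix c1 c2 assume h: "\<forall>x>1. c1 * \<psi>3 x + c2 * \<psi>4 x = 0"
    have "\<forall>x>1. poly (U c1 c2) x = 0"
    proof (intro allI impI)
      fix x :: real assume x: "x > 1"
      have "fw a b x * poly (U c1 c2) x = 0" using h comb[of c1 c2] x by simp
      thus "poly (U c1 c2) x = 0" using fw_pos[OF x, of a b] by simp
    qed
    hence "U c1 c2 = 0" by (rule poly_zero_on)
    hence "poly (U c1 c2) 1 = 0" "poly (U c1 c2) (-1) = 0" by simp_all
    thus "c1 = 0 \<and> c2 = 0" unfolding U1 Um1 using q1 pm1 by simp
  qed
  have typedU: "typed_eigenfunction a b \<phi> 2 (real (degree (U c3 c4))) (real (degree (U c3 c4)) - real a - real b)"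
    if "c3 \<noteq> 0" "c4 \<noteq> 0" "\<forall>y>1. \<phi> y = c3 * \<psi>3 y + c4 * \<psi>4 y" for \<phi> c3 c4
  proof (rule typed_of_rep[where al=a and be=b and u="U c3 c4"])
    show "\<forall>y>1. \<phi> y = fw a b y * poly (U c3 c4) y" using that(3) comb[of c3 c4] by simp
    show "poly (U c3 c4) 1 \<noteq> 0" using U1 that q1 by simp
    show "poly (U c3 c4) (-1) \<noteq> 0" using Um1 that pm1 by simp
  qed (use a0 b0 in \<open>simp_all add: type_offset_def\<close>)
  define \<psi>2 where "\<psi>2 = (\<lambda>x. lead_coeff p * \<psi>3 x + (- lead_coeff q) * \<psi>4 x)"
  have \<psi>2E: "\<psi>2 \<in> E" unfolding \<psi>2_def by (rule UE)
  have rat: "rational_fun \<phi>" if phiE: "\<phi> \<in> E" for \<phi>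
  proof -
    obtain c3 c4 where c: "\<forall>x>1. \<phi> x = c3 * \<psi>3 x + c4 * \<psi>4 x" using span[OF phiE] by blast
    show ?thesis unfolding rational_fun_def
    proof (intro exI conjI)
      show "[:-1,1:]^a * [:1,1:]^b \<noteq> (0::real poly)" by simp
      show "\<forall>x>1. poly ([:-1,1:]^a * [:1,1:]^b) x * \<phi> x = poly (U c3 c4) x"
      proof (intro allI impI)
        fix x :: real assume x: "x > 1"
        have "poly ([:-1,1:]^a * [:1,1:]^b) x * \<phi> x = (fw a b x * ((x-1)^a * (x+1)^b)) * poly (U c3 c4) x"
          using c comb[of c3 c4] x by (simp add: algebra_simps)
        thus "poly ([:-1,1:]^a * [:1,1:]^b) x * \<phi> x = poly (U c3 c4) x" using fw_inv[OF x, of a b] by simp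
      qed
    qed
  qed
  have L2: "typed_eigenfunction a b \<phi> 2 (real k) (real k - real a - real b)"
    if inl: "in_line \<psi>2 \<phi>" and nzp: "nonzero_on \<phi>" for \<phi>
  proof -
    obtain c where c: "\<forall>x>1. \<phi> x = c * \<psi>2 x" using inl unfolding in_line_def by blast
    have c0: "c \<noteq> 0" using nzp c unfolding nonzero_on_def by auto
    have eq: "\<forall>y>1. \<phi> y = (c * lead_coeff p) * \<psi>3 y + (- c * lead_coeff q) * \<psi>4 y"
      using c by (simp add: \<psi>2_def algebra_simps)
    have dk: "degree (U (c * lead_coeff p) (- c * lead_coeff q)) = k"
      by (rule degk) (use c0 lcp in \<open>simp_all add: algebra_simps\<close>)
    show ?thesis using typedU[of "c * lead_coeff p" "- c * lead_coeff q", OF _ _ eq] c0 lcp lcq dk by simp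
  qed
  have L3: "typed_eigenfunction a b \<phi> 3 (real a - real k - 1) (- real k - 1)"
    if inl: "in_line \<psi>3 \<phi>" and nzp: "nonzero_on \<phi>" for \<phi>
  proof -
    obtain c where c: "\<forall>x>1. \<phi> x = c * \<psi>3 x" using inl unfolding in_line_def by blast
    have c0: "c \<noteq> 0" using nzp c unfolding nonzero_on_def by auto
    show ?thesis
    proof (rule typed_of_rep[where al=a and be=0 and u="smult c q"])
      show "\<forall>y>1. \<phi> y = fw a 0 y * poly (smult c q) y" using c by (simp add: \<psi>3_def)
      show "poly (smult c q) 1 \<noteq> 0" using c0 q1 by simp
      show "poly (smult c q) (-1) \<noteq> 0" using c0 qm1 by simp
    qed (use a0 c0 rm' in \<open>simp_all add: type_offset_def qd\<close>)
  qed
  have L4: "typed_eigenfunction a b \<phi> 4 (real b - real k - 1) (- real k - 1)"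
    if inl: "in_line \<psi>4 \<phi>" and nzp: "nonzero_on \<phi>" for \<phi>
  proof -
    obtain c where c: "\<forall>x>1. \<phi> x = c * \<psi>4 x" using inl unfolding in_line_def by blast
    have c0: "c \<noteq> 0" using nzp c unfolding nonzero_on_def by auto
    show ?thesis
    proof (rule typed_of_rep[where al=0 and be=b and u="smult c p"])
      show "\<forall>y>1. \<phi> y = fw 0 b y * poly (smult c p) y" using c by (simp add: \<psi>4_def)
      show "poly (smult c p) 1 \<noteq> 0" using c0 p1 by simp
      show "poly (smult c p) (-1) \<noteq> 0" using c0 pm1 by simp
    qed (use b0 c0 rm in \<open>simp_all add: type_offset_def pd\<close>)
  qed
  have Lgen: "typed_eigenfunction a b \<phi> 2 (real a + real b - real k - 1) (- real k - 1)"
    if phiE: "\<phi> \<in> E" and n2: "\<not> in_line \<psi>2 \<phi>" and n3: "\<not> in_line \<psi>3 \<phi>" and n4: "\<not> in_line \<psi>4 \<phi>" for \<phi>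
  proof -
    obtain c3 c4 where c: "\<forall>x>1. \<phi> x = c3 * \<psi>3 x + c4 * \<psi>4 x" using span[OF phiE] by blast
    have c4: "c4 \<noteq> 0"
    proof
      assume "c4 = 0"
      hence "in_line \<psi>3 \<phi>" unfolding in_line_def using c by auto
      thus False using n3 by simp
    qed
    have c3: "c3 \<noteq> 0"
    proof
      assume "c3 = 0"
      hence "in_line \<psi>4 \<phi>" unfolding in_line_def using c by auto
      thus False using n4 by simp
    qed
    have cc: "c3 * lead_coeff q + c4 * lead_coeff p \<noteq> 0"
    proof
      assume h: "c3 * lead_coeff q + c4 * lead_coeff p = 0"
      have "c4 = - c3 * lead_coeff q / lead_coeff p" using h lcp by (simp add: field_simps)
      hence "\<forall>x>1. \<phi> x = (c3 / lead_coeff p) * \<psi>2 x" using c lcp by (simp add: \<psi>2_def field_simps)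
      hence "in_line \<psi>2 \<phi>" unfolding in_line_def by blast
      thus False using n2 by simp
    qed
    have T: "typed_eigenfunction a b \<phi> 2 (real (degree (U c3 c4))) (real (degree (U c3 c4)) - real a - real b)"
      by (rule typedU[OF c3 c4 c])
    have e1: "real (degree (U c3 c4)) = real a + real b - real k - 1" using degn[OF cc] rn by simp
    have e2: "real (degree (U c3 c4)) - real a - real b = - real k - 1" using e1 by simp
    show ?thesis using T[unfolded e2] by (simp only: e1)
  qed
  have nz2: "nonzero_on \<psi>2"
    using typedU[of "lead_coeff p" "- lead_coeff q" \<psi>2] lcp lcq unfolding typed_eigenfunction_def \<psi>2_def by simp
  have nz3: "nonzero_on \<psi>3" using rep_props(1)[OF eq3 q1] qm1 by simp
  have nz4: "nonzero_on \<psi>4" using rep_props(1)[OF eq4 p1[THEN arg_cong[where f="\<lambda>t. t \<noteq> 0"], simplified] pm1] .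
  have ni23: "\<not> in_line \<psi>2 \<psi>3"
  proof
    assume "in_line \<psi>2 \<psi>3"
    then obtain c where c: "\<forall>x>1. \<psi>3 x = c * \<psi>2 x" unfolding in_line_def by blast
    have "\<forall>x>1. (1 - c * lead_coeff p) * \<psi>3 x + (c * lead_coeff q) * \<psi>4 x = 0"
      using c by (simp add: \<psi>2_def algebra_simps)
    hence "1 - c * lead_coeff p = 0 \<and> c * lead_coeff q = 0" using indep unfolding lin_indep2_def by blast
    thus False using lcq by auto
  qed
  have ni24: "\<not> in_line \<psi>2 \<psi>4"
  proof
    assume "in_line \<psi>2 \<psi>4"
    then obtain c where c: "\<forall>x>1. \<psi>4 x = c * \<psi>2 x" unfolding in_line_def by blast
    have "\<forall>x>1. (- c * lead_coeff p) * \<psi>3 x + (1 + c * lead_coeff q) * \<psi>4 x = 0"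
      using c by (simp add: \<psi>2_def algebra_simps)
    hence "- c * lead_coeff p = 0 \<and> 1 + c * lead_coeff q = 0" using indep unfolding lin_indep2_def by blast
    thus False using lcp by auto
  qed
  have ni34: "\<not> in_line \<psi>3 \<psi>4"
  proof
    assume "in_line \<psi>3 \<psi>4"
    then obtain c where c: "\<forall>x>1. \<psi>4 x = c * \<psi>3 x" unfolding in_line_def by blast
    have "\<forall>x>1. (- c) * \<psi>3 x + 1 * \<psi>4 x = 0" using c by simp
    hence "- c = 0 \<and> (1::real) = 0" using indep unfolding lin_indep2_def by blast
    thus False by simp
  qed
  show ?thesis
  proof (intro conjI)
    show "\<exists>\<phi>1\<in>E. \<exists>\<phi>2\<in>E. lin_indep2 \<phi>1 \<phi>2 \<and> (\<forall>\<phi>\<in>E. \<exists>c1 c2. \<forall>x>1. \<phi> x = c1 * \<phi>1 x + c2 * \<phi>2 x)"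
      using \<psi>3E \<psi>4E indep span by blast
    show "\<forall>\<phi>\<in>E. rational_fun \<phi>" using rat by blast
    show "\<exists>\<psi>2\<in>E. \<exists>\<psi>3\<in>E. \<exists>\<psi>4\<in>E.
            nonzero_on \<psi>2 \<and> nonzero_on \<psi>3 \<and> nonzero_on \<psi>4
          \<and> \<not> in_line \<psi>2 \<psi>3 \<and> \<not> in_line \<psi>2 \<psi>4 \<and> \<not> in_line \<psi>3 \<psi>4
          \<and> (\<forall>\<phi>\<in>E. in_line \<psi>2 \<phi> \<and> nonzero_on \<phi> \<longrightarrow>
               typed_eigenfunction a b \<phi> 2 (real k) (real k - real a - real b))
          \<and> (\<forall>\<phi>\<in>E. in_line \<psi>3 \<phi> \<and> nonzero_on \<phi> \<longrightarrow>
               typed_eigenfunction a b \<phi> 3 (real a - real k - 1) (- real k - 1))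
          \<and> (\<forall>\<phi>\<in>E. in_line \<psi>4 \<phi> \<and> nonzero_on \<phi> \<longrightarrow>
               typed_eigenfunction a b \<phi> 4 (real b - real k - 1) (- real k - 1))
          \<and> (\<forall>\<phi>\<in>E. \<not> in_line \<psi>2 \<phi> \<and> \<not> in_line \<psi>3 \<phi> \<and> \<not> in_line \<psi>4 \<phi> \<longrightarrow>
               typed_eigenfunction a b \<phi> 2 (real a + real b - real k - 1) (- real k - 1))"
      using \<psi>2E \<psi>3E \<psi>4E nz2 nz3 nz4 ni23 ni24 ni34 L2 L3 L4 Lgen by blast
  qed
qed

end
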